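(* Let $T_1,\ldots,T_N$ be a colored tiling of the sphere $\mathbb{S}^d$ (finitely many closed tiles covering $\mathbb{S}^d$, distinct tiles meeting only in their boundaries) such that every tile and every non-empty intersection of tiles is a disjoint union of finitely many contractible sets. Assume each $T_i$ has an open neighborhood $U_i\supseteq T_i$ in $\mathbb{S}^d$ such that for every set of indices $I$, $\bigcap_{i\in I}U_i\ne\emptyset$ if and only if $\bigcap_{i\in I}T_i\ne\emptyset$, and every $U_i$ and every non-empty intersection of the $U_i$'s is a disjoint union of finitely many contractible sets. Then there exist $d+1$ distinct tiles with a common point. Consequently, if no two distinct tiles of the same color intersect, the number of colors is at least $d+1$.
   Context: A set is contractible if its identity map is homotopic to a constant map. A colored tiling assigns a color to each tile. *)

theory Defs
  imports "HOL-Analysis.Analysis"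
begin

text \<open>A set is a (topological) disjoint union of finitely many contractible sets:
  it is the union of a finite family of pairwise disjoint contractible sets,
  each of which is open and closed in the subspace topology of the union
  (i.e. the pieces are the summands of a topological disjoint union).\<close>
definition fin_disj_union_contractible :: "'a::real_normed_vector set \<Rightarrow> bool" where
  "fin_disj_union_contractible S \<longleftrightarrow>
     (\<exists>\<C>. finite \<C> \<and> \<Union>\<C> = S \<and> pairwise disjnt \<C> \<and>
          (\<forall>C\<in>\<C>. contractible C \<and> openin (top_of_set S) C \<and> closedin (top_of_set S) C))"

end

theory Submission imports Defs "HOL-Homology.Homology" begin

lemma exact3_trivial:
  assumes "exact_seq ([C,B,A],[g,f])" "trivial_group A" "trivial_group C"
  shows "trivial_group B"
proof -
  from assms(1) have gh: "group_hom A B f" and g: "g \<in> hom B C" and k: "kernel B C g = f ` carrier A"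
    by auto
  have "f ` carrier A = {one B}"
    using group_hom.image_from_trivial_group[OF gh assms(2)] .
  moreover have "kernel B C g = carrier B"
    using group_hom.kernel_to_trivial_group[of B C g] g gh assms(3)
    by (simp add: group_hom_def group_hom_axioms_def trivial_group_def)
  ultimately show ?thesis using k gh by (simp add: trivial_group_def group_hom_def)
qed

lemma trivial_DirProd:
  assumes "trivial_group G" "trivial_group H"
  shows "trivial_group (DirProd G H)"
  using assms by (auto simp: trivial_group_def DirProd_group)

lemma iso_trivial:
  assumes "f \<in> iso G H" "trivial_group G" "group H"
  shows "trivial_group H"
  using isomorphic_group_triviality1[of G H] assms by (auto simp: is_iso_def)

lemma homology_contractible:
  assumes "contractible C" "p \<noteq> 0"
  shows "trivial_group (homology_group p (top_of_set C))"
  using trivial_reduced_homology_group_contractible_space[of "top_of_set C" p] assms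
  by (simp add: un_reduced_homology_group)

lemma homology_fdu:
  fixes S :: "'a::real_normed_vector set"
  assumes "finite \<C>" "\<Union>\<C> = S" "pairwise disjnt \<C>"
    "\<forall>C\<in>\<C>. contractible C \<and> openin (top_of_set S) C" "p \<noteq> 0"
  shows "trivial_group (homology_group p (top_of_set S))"
  using assms
proof (induction \<C> arbitrary: S rule: finite_induct)
  case empty
  then show ?case by (simp add: trivial_homology_group_empty)
next
  case (insert C \<C>)
  define S' where "S' = \<Union>\<C>"
  have S: "S = C \<union> S'" using insert by (auto simp: S'_def)
  have dj: "disjnt C S'" using insert.prems(2) insert.hyps(2) unfolding S'_def pairwise_def
    by (auto simp: disjnt_def)
  have oC: "openin (top_of_set S) C" using insert by auto
  have oS': "openin (top_of_set S) S'"
    unfolding S'_def using insert.prems(3) by (auto intro: openin_Union)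
  have h1: "trivial_group (homology_group p (top_of_set C))"
    using homology_contractible insert by auto
  have h2: "trivial_group (homology_group p (top_of_set S'))"
  proof (rule insert.IH)
    show "\<Union>\<C> = S'" by (simp add: S'_def)
    show "pairwise disjnt \<C>" using insert.prems(2) by (simp add: pairwise_insert)
    show "\<forall>C\<in>\<C>. contractible C \<and> openin (top_of_set S') C"
    proof
      fix D assume D: "D \<in> \<C>"
      then have "openin (top_of_set S) D" "contractible D" using insert.prems(3) by auto
      moreover have "D \<subseteq> S'" "S' \<subseteq> S" using D S by (auto simp: S'_def)
      ultimately show "contractible D \<and> openin (top_of_set S') D"
        using openin_subset_trans by blast
    qed
    show "p \<noteq> 0" by fact
  qed
  have eqC: "subtopology (top_of_set S) C = top_of_set C" using S
    by (simp add: subtopology_subtopology Int_absorb1)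
  have eqS': "subtopology (top_of_set S) S' = top_of_set S'" using S
    by (simp add: subtopology_subtopology Int_absorb1)
  have tS: "topspace (top_of_set S) = C \<union> S'" using S by simp
  show ?case
    using iso_trivial[OF homology_additivity_explicit[OF oC oS' dj tS[symmetric], of p]]
      trivial_DirProd[OF h1 h2] eqC eqS' by simp
qed

lemma nerve_vanish:
  assumes "finite J" "\<forall>j\<in>J. openin X (U j)"
    "\<forall>I. I \<subseteq> J \<longrightarrow> I \<noteq> {} \<longrightarrow> (\<forall>p. p \<noteq> 0 \<longrightarrow> trivial_group (homology_group p (subtopology X (\<Inter>(U ` I)))))"
    "\<forall>I. I \<subseteq> J \<longrightarrow> card I = Suc k \<longrightarrow> \<Inter>(U ` I) = {}"
    "int k \<le> p"
  shows "trivial_group (homology_group p (subtopology X (\<Union>(U ` J))))"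
  using assms
proof (induction J arbitrary: U k p rule: finite_induct)
  case empty
  then show ?case by (simp add: trivial_homology_group_empty)
next
  case (insert n J)
  show ?case
  proof (cases k)
    case 0
    have "U j = {}" if "j \<in> insert n J" for j
      using insert.prems(3)[rule_format, of "{j}"] that 0 by auto
    then show ?thesis by (simp add: trivial_homology_group_empty)
  next
    case (Suc k')
    define A where "A = \<Union>(U ` J)"
    define B where "B = U n"
    have oA: "openin X A" using insert.prems(1) by (auto simp: A_def)
    have oB: "openin X B" using insert.prems(1) by (auto simp: B_def)
    have AB: "\<Union>(U ` insert n J) = A \<union> B" by (auto simp: A_def B_def)
    define Y where "Y = subtopology X (A \<union> B)"
    have hA: "trivial_group (homology_group p (subtopology X A))"
      unfolding A_def
      by (rule insert.IH) (use insert.prems in auto)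
    have p0: "p \<noteq> 0" using Suc insert.prems(4) by auto
    have hB: "trivial_group (homology_group p (subtopology X B))"
      using insert.prems(2)[rule_format, of "{n}"] p0 by (auto simp: B_def)
    define V where "V = (\<lambda>j. U j \<inter> U n)"
    have hAB: "trivial_group (homology_group (p-1) (subtopology X (\<Union>(V ` J))))"
    proof (rule insert.IH)
      show "\<forall>j\<in>J. openin X (V j)" using insert.prems(1) by (auto simp: V_def)
      show "int k' \<le> p - 1" using Suc insert.prems(4) by auto
      show "\<forall>I\<subseteq>J. I \<noteq> {} \<longrightarrow> (\<forall>p. p \<noteq> 0 \<longrightarrow> trivial_group (homology_group p (subtopology X (\<Inter> (V ` I)))))"
      proof (intro allI impI)
        fix I p assume I: "I \<subseteq> J" "I \<noteq> {}" and p: "p \<noteq> (0::int)"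
        have "\<Inter> (V ` I) = \<Inter> (U ` insert n I)" using I by (auto simp: V_def)
        moreover have "insert n I \<subseteq> insert n J" using I by auto
        moreover have "trivial_group (homology_group p (subtopology X (\<Inter> (U ` insert n I))))"
          using insert.prems(2) p \<open>insert n I \<subseteq> insert n J\<close> by blast
        ultimately show "trivial_group (homology_group p (subtopology X (\<Inter> (V ` I))))"
          by simp
      qed
      show "\<forall>I\<subseteq>J. card I = Suc k' \<longrightarrow> \<Inter> (V ` I) = {}"
      proof (intro allI impI)
        fix I assume I: "I \<subseteq> J" "card I = Suc k'"
        then have "finite I" using insert.hyps(1) finite_subset by blast
        moreover have "n \<notin> I" using I insert.hyps(2) by auto
        ultimately have "card (insert n I) = Suc k" using I Suc by simp
        moreover have "I \<noteq> {}" using I by auto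
        then have "\<Inter> (V ` I) = \<Inter> (U ` insert n I)" by (auto simp: V_def)
        moreover have "insert n I \<subseteq> insert n J" using I by auto
        ultimately show "\<Inter> (V ` I) = {}" using insert.prems(3) by metis
      qed
    qed
    have VAB: "\<Union>(V ` J) = A \<inter> B" by (auto simp: V_def A_def B_def)
    have AsubX: "A \<subseteq> topspace X" "B \<subseteq> topspace X" using oA oB openin_subset by auto
    have tY: "topspace Y = A \<union> B" using AsubX by (auto simp: Y_def)
    have oAY: "openin Y A" unfolding Y_def using openin_subtopology_Int2[OF oA, of "A \<union> B"]
      by (simp add: Int_absorb1)
    have oBY: "openin Y B" unfolding Y_def using openin_subtopology_Int2[OF oB, of "A \<union> B"]
      by (simp add: Int_absorb1)
    have cY: "closedin Y (A - B)"
    proof -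
      have "A - B = topspace Y - B" using tY by auto
      then show ?thesis using oBY by (simp add: closedin_diff)
    qed
    have exc1: "Y closure_of (A - B) \<subseteq> Y interior_of A"
      using cY oAY by (simp add: closure_of_closedin interior_of_openin)
    have exc: "hom_induced p (subtopology Y (topspace Y - (A - B))) (A - (A - B)) (subtopology Y (topspace Y)) A id
       \<in> iso (relative_homology_group p (subtopology Y (topspace Y - (A - B))) (A - (A - B)))
             (relative_homology_group p (subtopology Y (topspace Y)) A)"
      by (rule homology_excision_axiom[OF exc1]) (simp add: tY)
    have e1: "subtopology Y (topspace Y - (A - B)) = subtopology X B"
    proof -
      have "(A \<union> B) \<inter> (topspace Y - (A - B)) = B" using tY by auto
      then show ?thesis unfolding Y_def by (simp add: subtopology_subtopology)
    qed
    have e2: "A - (A - B) = A \<inter> B" by auto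
    have relB: "trivial_group (relative_homology_group p (subtopology X B) (A \<inter> B))"
    proof (rule exact3_trivial[OF homology_exactness_axiom_1[of p "subtopology X B" "A \<inter> B"]])
      show "trivial_group (homology_group p (subtopology X B))" by fact
      have "subtopology (subtopology X B) (A \<inter> B) = subtopology X (A \<inter> B)"
        by (simp add: subtopology_subtopology Int_commute Int_left_commute)
      then show "trivial_group (homology_group (p - 1) (subtopology (subtopology X B) (A \<inter> B)))"
        using hAB VAB by simp
    qed
    have relY: "trivial_group (relative_homology_group p Y A)"
      using iso_trivial[OF exc] relB e1 e2 by simp
    have "trivial_group (homology_group p Y)"
    proof (rule exact3_trivial[OF homology_exactness_axiom_3[of p Y A]])
      show "trivial_group (relative_homology_group p Y A)" by fact
      have "subtopology Y A = subtopology X A" unfolding Y_def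
        by (simp add: subtopology_subtopology Int_absorb1)
      then show "trivial_group (homology_group p (subtopology Y A))" using hA by simp
    qed
    then show ?thesis using AB by (simp add: Y_def)
  qed
qed

theorem proposition3p4:
  fixes T U :: "nat \<Rightarrow> 'a::euclidean_space set"
    and col :: "nat \<Rightarrow> 'c"
    and N d :: nat
  assumes dim: "DIM('a) = d + 1"
    and tiles_closed: "\<And>i. i < N \<Longrightarrow> closed (T i) \<and> T i \<subseteq> sphere 0 1"
    and tiles_cover: "(\<Union>i<N. T i) = sphere 0 1"
    and tiles_distinct: "inj_on T {..<N}"
    and tiles_boundary: "\<And>i j. i < N \<Longrightarrow> j < N \<Longrightarrow> i \<noteq> j \<Longrightarrow>
          T i \<inter> T j \<subseteq> (top_of_set (sphere 0 1)) frontier_of (T i)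
                     \<inter> (top_of_set (sphere 0 1)) frontier_of (T j)"
    and tiles_good: "\<And>I. I \<subseteq> {..<N} \<Longrightarrow> I \<noteq> {} \<Longrightarrow> (\<Inter>i\<in>I. T i) \<noteq> {} \<Longrightarrow>
          fin_disj_union_contractible (\<Inter>i\<in>I. T i)"
    and nbhd_open: "\<And>i. i < N \<Longrightarrow> openin (top_of_set (sphere 0 1)) (U i)"
    and nbhd_sub: "\<And>i. i < N \<Longrightarrow> T i \<subseteq> U i"
    and nbhd_nerve: "\<And>I. I \<subseteq> {..<N} \<Longrightarrow>
          ((\<Inter>i\<in>I. U i) \<noteq> {} \<longleftrightarrow> (\<Inter>i\<in>I. T i) \<noteq> {})"
    and nbhd_good: "\<And>I. I \<subseteq> {..<N} \<Longrightarrow> I \<noteq> {} \<Longrightarrow> (\<Inter>i\<in>I. U i) \<noteq> {} \<Longrightarrow>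
          fin_disj_union_contractible (\<Inter>i\<in>I. U i)"
  shows "(\<exists>I. I \<subseteq> {..<N} \<and> card I = d + 1 \<and> (\<Inter>i\<in>I. T i) \<noteq> {})
       \<and> ((\<forall>i<N. \<forall>j<N. i \<noteq> j \<and> col i = col j \<longrightarrow> T i \<inter> T j = {})
            \<longrightarrow> card (col ` {..<N}) \<ge> d + 1)"
proof -
  define X where "X = top_of_set (sphere (0::'a) 1)"
  have Usub: "U i \<subseteq> sphere 0 1" if "i < N" for i
    using openin_subset[OF nbhd_open[OF that]] by simp
  have part1: "\<exists>I. I \<subseteq> {..<N} \<and> card I = d + 1 \<and> (\<Inter>i\<in>I. T i) \<noteq> {}"
  proof (rule ccontr)
    assume neg: "\<not> ?thesis"
    have noU: "\<forall>I. I \<subseteq> {..<N} \<longrightarrow> card I = Suc d \<longrightarrow> \<Inter>(U ` I) = {}"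
      using neg nbhd_nerve by auto
    have sne: "sphere (0::'a) 1 \<noteq> {}" by simp
    show False
    proof (cases "d = 0")
      case True
      obtain x where "x \<in> sphere (0::'a) 1" using sne by blast
      then obtain i where "i < N" "x \<in> T i" using tiles_cover by blast
      then have "{i} \<subseteq> {..<N} \<and> card {i} = d + 1 \<and> (\<Inter>i\<in>{i}. T i) \<noteq> {}"
        using True by auto
      then show False using neg by blast
    next
      case False
      have good: "\<forall>I. I \<subseteq> {..<N} \<longrightarrow> I \<noteq> {} \<longrightarrow> (\<forall>p. p \<noteq> 0 \<longrightarrow>
          trivial_group (homology_group p (subtopology X (\<Inter>(U ` I)))))"
      proof (intro allI impI)
        fix I p assume I: "I \<subseteq> {..<N}" "I \<noteq> {}" and p: "p \<noteq> (0::int)"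
        obtain i0 where i0: "i0 \<in> I" using I by blast
        have sub: "\<Inter>(U ` I) \<subseteq> sphere 0 1" using Usub i0 I by blast
        have eq: "subtopology X (\<Inter>(U ` I)) = top_of_set (\<Inter>(U ` I))"
          unfolding X_def using sub by (simp add: subtopology_subtopology Int_absorb1)
        show "trivial_group (homology_group p (subtopology X (\<Inter>(U ` I))))"
        proof (cases "\<Inter>(U ` I) = {}")
          case True
          then show ?thesis by (simp add: eq trivial_homology_group_empty)
        next
          case False
          then obtain \<C> where C: "finite \<C>" "\<Union>\<C> = \<Inter>(U ` I)" "pairwise disjnt \<C>"
            "\<forall>C\<in>\<C>. contractible C \<and> openin (top_of_set (\<Inter>(U ` I))) C"
            using nbhd_good[OF I] unfolding fin_disj_union_contractible_def by blast
          show ?thesis unfolding eq by (rule homology_fdu[OF C p])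
        qed
      qed
      have opens: "\<forall>j\<in>{..<N}. openin X (U j)" using nbhd_open by (simp add: X_def)
      have triv: "trivial_group (homology_group (int d) (subtopology X (\<Union>(U ` {..<N}))))"
        by (rule nerve_vanish[OF _ opens good noU]) auto
      have un: "\<Union>(U ` {..<N}) = sphere 0 1"
        using tiles_cover nbhd_sub Usub by blast
      have triv2: "trivial_group (homology_group (int d) X)"
        using triv un by (simp add: X_def subtopology_subtopology)
      obtain f :: "(nat \<Rightarrow> real) \<Rightarrow> 'a" and g where
        fg: "homeomorphic_maps (nsphere(DIM('a) - 1)) (top_of_set (sphere 0 1 \<inter> span Basis)) f g"
        using homeomorphic_maps_nsphere_euclidean_sphere[OF independent_Basis orthogonal_Basis refl]
          norm_Basis by auto
      have hs: "nsphere d homeomorphic_space X"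
        using fg dim unfolding X_def homeomorphic_space_def by auto
      have "homology_group (int d) (nsphere d) \<cong> homology_group (int d) X"
        by (rule homeomorphic_space_imp_isomorphic_homology_groups[OF hs])
      then have "trivial_group (homology_group (int d) (nsphere d))"
        using triv2 isomorphic_group_triviality[OF _ group_relative_homology_group group_relative_homology_group] by blast
      then have "trivial_group (reduced_homology_group (int d) (nsphere d))"
        using False by (simp add: un_reduced_homology_group)
      moreover have "reduced_homology_group (int d) (nsphere d) \<cong> integer_group"
        using reduced_homology_group_nsphere(1) .
      ultimately have "trivial_group integer_group"
        using isomorphic_group_triviality1 group_integer_group by blast
      then show False by (simp add: trivial_group_def) (metis UNIV_I singletonD zero_neq_one)
    qed
  qed
  then obtain I where I: "I \<subseteq> {..<N}" "card I = d + 1" "(\<Inter>i\<in>I. T i) \<noteq> {}" by blast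
  show ?thesis
  proof (intro conjI impI)
    show "\<exists>I. I \<subseteq> {..<N} \<and> card I = d + 1 \<and> (\<Inter>i\<in>I. T i) \<noteq> {}" using I by blast
    assume H: "\<forall>i<N. \<forall>j<N. i \<noteq> j \<and> col i = col j \<longrightarrow> T i \<inter> T j = {}"
    have "inj_on col I"
    proof (rule inj_onI)
      fix i j assume ij: "i \<in> I" "j \<in> I" "col i = col j"
      obtain x where "x \<in> (\<Inter>i\<in>I. T i)" using I by blast
      then have "x \<in> T i \<inter> T j" using ij by blast
      then show "i = j" using H ij I by blast
    qed
    then have "card (col ` I) = d + 1" using I card_image by metis
    moreover have "card (col ` I) \<le> card (col ` {..<N})"
      using I by (intro card_mono) auto
    ultimately show "card (col ` {..<N}) \<ge> d + 1" by simp
  qed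
qed

end
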